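(* Fix $k\in\mathbb N$ and $a_1,\dots,a_k>0$. Then, as $N\to\infty$, $$N^{2/k}\Big[\min_{j=1}^N\Big(\sum_{i=1}^k a_i(\sqrt N\gamma_{ij})^2\Big)-\min_{j=1}^N\Big(\sum_{i=1}^k a_iw_{ij}^2\Big)\Big]\to0\quad\text{in probability}.$$
   Context: Let $\mathbf{y}_1,\dots,\mathbf{y}_N$ be i.i.d. $\mathcal N(0,\mathrm{Id}_N)$ vectors in $\mathbb R^N$. Gram–Schmidt: $\mathbf w_1=\mathbf y_1$, $\mathbf w_i=\mathbf y_i-\sum_{j<i}\frac{\langle\mathbf y_i,\mathbf w_j\rangle}{\|\mathbf w_j\|^2}\mathbf w_j$, with $w_{ij}$ the $j$-th entry of $\mathbf w_i$, and $\boldsymbol\gamma_i=\mathbf w_i/\|\mathbf w_i\|$ with $j$-th entry $\gamma_{ij}$. *)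

theory Defs
  imports "HOL-Probability.Probability"
begin

text \<open>Vectors in R^N are functions nat => real, coordinates indexed by 1..N.\<close>

definition ipN :: "nat \<Rightarrow> (nat \<Rightarrow> real) \<Rightarrow> (nat \<Rightarrow> real) \<Rightarrow> real" where
  "ipN N u v = (\<Sum>l\<in>{1..N}. u l * v l)"

text \<open>Gram-Schmidt: gs N y i is w_i, where y i is the i-th vector (entry l is y i l).\<close>
function gs :: "nat \<Rightarrow> (nat \<Rightarrow> nat \<Rightarrow> real) \<Rightarrow> nat \<Rightarrow> nat \<Rightarrow> real" where
  "gs N y i = (\<lambda>l. y i l - (\<Sum>j\<in>{1..<i}.
       (ipN N (y i) (gs N y j) / ipN N (gs N y j) (gs N y j)) * gs N y j l))"
  by auto
termination
  by (relation "Wellfounded.measure (\<lambda>(N, y, i). i)") auto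

definition gsn :: "nat \<Rightarrow> (nat \<Rightarrow> nat \<Rightarrow> real) \<Rightarrow> nat \<Rightarrow> nat \<Rightarrow> real" where
  "gsn N y i l = gs N y i l / sqrt (ipN N (gs N y i) (gs N y i))"

text \<open>Sample space for size N: N^2 i.i.d. standard Gaussians omega (i,l), i,l in 1..N;
  y_i has l-th entry omega (i,l).\<close>
definition gauss_space :: "nat \<Rightarrow> (nat \<times> nat \<Rightarrow> real) measure" where
  "gauss_space N = PiM ({1..N} \<times> {1..N}) (\<lambda>_. std_normal_distribution)"

definition yvec :: "(nat \<times> nat \<Rightarrow> real) \<Rightarrow> nat \<Rightarrow> nat \<Rightarrow> real" where
  "yvec \<omega> i l = \<omega> (i, l)"

end

theory Submission
  imports Defs "HOL-Real_Asymp.Real_Asymp"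
begin

lemma ps_normal: "prob_space std_normal_distribution"
  by (rule prob_space_normal_density) simp

lemma normal_UNIV: "measure std_normal_distribution UNIV = 1"
  using prob_space.prob_space[OF ps_normal] by simp

lemma psf_normal: "product_sigma_finite (\<lambda>_::'i. std_normal_distribution)"
  unfolding product_sigma_finite_def using prob_space_imp_sigma_finite[OF ps_normal] by simp

lemma ps_PiM_normal: "prob_space (PiM I (\<lambda>_. std_normal_distribution))"
  by (intro prob_space_PiM ps_normal)

lemma prodI_integral:
  fixes h :: "'i \<Rightarrow> real \<Rightarrow> real"
  assumes "finite I" "S \<subseteq> I" "\<And>x. x \<in> S \<Longrightarrow> integrable std_normal_distribution (h x)"
  shows "integrable (PiM I (\<lambda>_. std_normal_distribution)) (\<lambda>\<omega>. \<Prod>x\<in>S. h x (\<omega> x))"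
    "(\<integral>\<omega>. (\<Prod>x\<in>S. h x (\<omega> x)) \<partial>PiM I (\<lambda>_. std_normal_distribution))
       = (\<Prod>x\<in>S. integral\<^sup>L std_normal_distribution (h x))"
proof -
  interpret product_sigma_finite "\<lambda>_::'i. std_normal_distribution" by (rule psf_normal)
  interpret P: prob_space std_normal_distribution by (rule ps_normal)
  define f where "f x = (if x \<in> S then h x else (\<lambda>_. 1::real))" for x
  have fS: "(\<Prod>x\<in>I. f x (\<omega> x)) = (\<Prod>x\<in>S. h x (\<omega> x))" for \<omega>
    using assms(1,2) by (intro prod.mono_neutral_cong_right) (auto simp: f_def)
  have fi: "integrable std_normal_distribution (f x)" for x
    using assms(3) by (auto simp: f_def)
  show "integrable (PiM I (\<lambda>_. std_normal_distribution)) (\<lambda>\<omega>. \<Prod>x\<in>S. h x (\<omega> x))"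
    using product_integrable_prod[OF assms(1), of f] fi by (simp add: fS)
  have "(\<integral>\<omega>. (\<Prod>x\<in>I. f x (\<omega> x)) \<partial>PiM I (\<lambda>_. std_normal_distribution))
      = (\<Prod>x\<in>I. integral\<^sup>L std_normal_distribution (f x))"
    using product_integral_prod[OF assms(1), of f] fi by simp
  also have "\<dots> = (\<Prod>x\<in>S. integral\<^sup>L std_normal_distribution (h x))"
    using assms(1,2) by (intro prod.mono_neutral_cong_right) (auto simp: f_def normal_UNIV)
  finally show "(\<integral>\<omega>. (\<Prod>x\<in>S. h x (\<omega> x)) \<partial>PiM I (\<lambda>_. std_normal_distribution))
       = (\<Prod>x\<in>S. integral\<^sup>L std_normal_distribution (h x))" by (simp add: fS)
qed

lemma colvar:
  fixes h :: "real \<Rightarrow> real" and S :: "'l \<Rightarrow> 'i set" and I :: "'i set"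
  assumes fin: "finite I" "finite L" and SI: "\<And>l. l \<in> L \<Longrightarrow> S l \<subseteq> I"
    and disj: "disjoint_family_on S L"
    and hm: "h \<in> borel_measurable borel"
    and hi: "integrable std_normal_distribution h"
    and hi2: "integrable std_normal_distribution (\<lambda>t. (h t)^2)"
    and apos: "a > 0"
  shows "measure (PiM I (\<lambda>_. std_normal_distribution))
     {\<omega> \<in> space (PiM I (\<lambda>_. std_normal_distribution)).
        \<bar>(\<Sum>l\<in>L. \<Prod>x\<in>S l. h (\<omega> x)) - (\<Sum>l\<in>L. (integral\<^sup>L std_normal_distribution h) ^ card (S l))\<bar> \<ge> a}
     \<le> (\<Sum>l\<in>L. (integral\<^sup>L std_normal_distribution (\<lambda>t. (h t)^2)) ^ card (S l)) / a\<^sup>2 \<and>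
     {\<omega> \<in> space (PiM I (\<lambda>_. std_normal_distribution)).
        \<bar>(\<Sum>l\<in>L. \<Prod>x\<in>S l. h (\<omega> x)) - (\<Sum>l\<in>L. (integral\<^sup>L std_normal_distribution h) ^ card (S l))\<bar> \<ge> a}
     \<in> sets (PiM I (\<lambda>_. std_normal_distribution))"
proof -
  let ?M = "PiM I (\<lambda>_. std_normal_distribution)"
  interpret prob_space ?M by (rule ps_PiM_normal)
  define m1 where "m1 = integral\<^sup>L std_normal_distribution h"
  define m2 where "m2 = integral\<^sup>L std_normal_distribution (\<lambda>t. (h t)^2)"
  define Y where "Y = (\<lambda>l \<omega>. \<Prod>x\<in>S l. h (\<omega> x))"
  define f where "f \<omega> = (\<Sum>l\<in>L. Y l \<omega>)" for \<omega>
  have Sfin: "finite (S l)" if "l \<in> L" for l using SI[OF that] fin(1) finite_subset by blast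
  have Yint: "integrable ?M (Y l)" and YE: "expectation (Y l) = m1 ^ card (S l)" if "l \<in> L" for l
    using prodI_integral[OF fin(1) SI[OF that], of "\<lambda>_. h"] hi
    by (auto simp: Y_def m1_def)
  have YY: "integrable ?M (\<lambda>\<omega>. Y l \<omega> * Y l' \<omega>) \<and>
      expectation (\<lambda>\<omega>. Y l \<omega> * Y l' \<omega>) = (if l = l' then m2 ^ card (S l) else m1 ^ card (S l) * m1 ^ card (S l'))"
    if "l \<in> L" "l' \<in> L" for l l'
  proof (cases "l = l'")
    case True
    have eq: "Y l \<omega> * Y l' \<omega> = (\<Prod>x\<in>S l. (h (\<omega> x))^2)" for \<omega>
      using True by (simp add: Y_def power2_eq_square prod.distrib)
    show ?thesis unfolding eq
      using prodI_integral[OF fin(1) SI[OF that(1)], of "\<lambda>_ t. (h t)^2"] hi2 True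
      by (simp add: m2_def)
  next
    case False
    have d: "S l \<inter> S l' = {}" using disj that False by (auto simp: disjoint_family_on_def)
    have eq: "Y l \<omega> * Y l' \<omega> = (\<Prod>x\<in>S l \<union> S l'. h (\<omega> x))" for \<omega>
      using d Sfin[OF that(1)] Sfin[OF that(2)] by (simp add: Y_def prod.union_disjoint)
    have sub: "S l \<union> S l' \<subseteq> I" using SI that by auto
    show ?thesis unfolding eq
      using prodI_integral[OF fin(1) sub, of "\<lambda>_. h"] hi False d Sfin[OF that(1)] Sfin[OF that(2)]
      by (simp add: m1_def card_Un_disjoint power_add)
  qed
  have YYi: "integrable ?M (\<lambda>\<omega>. Y l \<omega> * Y l' \<omega>)" if "l \<in> L" "l' \<in> L" for l l'
    using YY[OF that] by blast
  have YYe: "expectation (\<lambda>\<omega>. Y l \<omega> * Y l' \<omega>) = (if l = l' then m2 ^ card (S l) else m1 ^ card (S l) * m1 ^ card (S l'))" if "l \<in> L" "l' \<in> L" for l l'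
    using YY[OF that] by blast
  have fint: "integrable ?M f" unfolding f_def using Yint by auto
  have f2eq: "(\<lambda>\<omega>. (f \<omega>)^2) = (\<lambda>\<omega>. \<Sum>l\<in>L. \<Sum>l'\<in>L. Y l \<omega> * Y l' \<omega>)"
    by (simp add: f_def power2_eq_square sum_product)
  have f2int: "integrable ?M (\<lambda>\<omega>. (f \<omega>)^2)"
    unfolding f2eq by (auto intro!: Bochner_Integration.integrable_sum YYi)
  have Ef: "expectation f = (\<Sum>l\<in>L. m1 ^ card (S l))"
    unfolding f_def using Yint YE by (simp add: Bochner_Integration.integral_sum)
  have Ef2: "expectation (\<lambda>\<omega>. (f \<omega>)^2) = (\<Sum>l\<in>L. \<Sum>l'\<in>L. (if l = l' then m2 ^ card (S l) else m1 ^ card (S l) * m1 ^ card (S l')))"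
    unfolding f2eq by (simp add: Bochner_Integration.integral_sum Bochner_Integration.integrable_sum YYi YYe)
  have "variance f = (\<Sum>l\<in>L. \<Sum>l'\<in>L. (if l = l' then m2 ^ card (S l) else m1 ^ card (S l) * m1 ^ card (S l')))
      - (\<Sum>l\<in>L. \<Sum>l'\<in>L. m1 ^ card (S l) * m1 ^ card (S l'))"
    using variance_eq[OF fint f2int] Ef Ef2 by (simp add: power2_eq_square sum_product)
  also have "\<dots> = (\<Sum>l\<in>L. \<Sum>l'\<in>L. (if l = l' then m2 ^ card (S l) - m1 ^ card (S l) * m1 ^ card (S l) else 0))"
    by (simp add: sum_subtractf[symmetric]) (intro sum.cong refl, auto)
  also have "\<dots> = (\<Sum>l\<in>L. m2 ^ card (S l) - (m1 ^ card (S l))^2)"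
    using fin(2) by (simp add: power2_eq_square)
  also have "\<dots> \<le> (\<Sum>l\<in>L. m2 ^ card (S l))"
    by (intro sum_mono) auto
  finally have var: "variance f \<le> (\<Sum>l\<in>L. m2 ^ card (S l))" .
  have fm: "f \<in> borel_measurable ?M"
    using fint by (rule borel_measurable_integrable)
  have "prob {\<omega> \<in> space ?M. \<bar>f \<omega> - expectation f\<bar> \<ge> a} \<le> variance f / a\<^sup>2"
    by (rule Chebyshev_inequality[OF fm f2int apos])
  also have "\<dots> \<le> (\<Sum>l\<in>L. m2 ^ card (S l)) / a\<^sup>2"
    using var apos by (simp add: divide_right_mono)
  finally have "prob {\<omega> \<in> space ?M. \<bar>f \<omega> - expectation f\<bar> \<ge> a} \<le> (\<Sum>l\<in>L. m2 ^ card (S l)) / a\<^sup>2" .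
  moreover have "{\<omega> \<in> space ?M. \<bar>f \<omega> - expectation f\<bar> \<ge> a} \<in> sets ?M"
    using fm by measurable
  ultimately show ?thesis unfolding Ef by (simp add: f_def Y_def m1_def m2_def)
qed

lemma nm_id1: "integral\<^sup>L std_normal_distribution (\<lambda>t. t) = 0"
  using integral_std_normal_distribution_moment_odd[of 1] by simp
lemma nm_2: "integral\<^sup>L std_normal_distribution (\<lambda>t. t^2) = 1"
  using std_normal_distribution_even_moments(1)[of 1] by simp
lemma nm_4: "integral\<^sup>L std_normal_distribution (\<lambda>t. (t^2)^2) = 3"
  using std_normal_distribution_even_moments(1)[of 2] by (simp add: fact_numeral power_mult[symmetric])
lemma ni_id: "integrable std_normal_distribution (\<lambda>t. t)"
  using integrable_std_normal_distribution_moment[of 1] by simp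
lemma ni_2: "integrable std_normal_distribution (\<lambda>t. t^2)"
  using integrable_std_normal_distribution_moment[of 2] by simp
lemma ni_4: "integrable std_normal_distribution (\<lambda>t. (t^2)^2)"
  using integrable_std_normal_distribution_moment[of 4] by (simp add: power_mult[symmetric])

lemma gram_off:
  assumes "i \<in> {1..N}" "j \<in> {1..N}" "i \<noteq> j" "a > 0"
  shows "measure (gauss_space N) {\<omega> \<in> space (gauss_space N). \<bar>ipN N (yvec \<omega> i) (yvec \<omega> j)\<bar> \<ge> a}
     \<le> real N / a\<^sup>2 \<and> {\<omega> \<in> space (gauss_space N). \<bar>ipN N (yvec \<omega> i) (yvec \<omega> j)\<bar> \<ge> a} \<in> sets (gauss_space N)"
proof -
  have SI: "\<And>l. l \<in> {1..N} \<Longrightarrow> {(i,l),(j,l)} \<subseteq> {1..N}\<times>{1..N}" using assms by auto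
  have dj: "disjoint_family_on (\<lambda>l. {(i,l),(j,l)}) {1..N}" by (auto simp: disjoint_family_on_def)
  have "measure (gauss_space N) {\<omega> \<in> space (gauss_space N).
        \<bar>(\<Sum>l\<in>{1..N}. \<Prod>x\<in>{(i,l),(j,l)}. \<omega> x) - (\<Sum>l\<in>{1..N}. (integral\<^sup>L std_normal_distribution (\<lambda>t. t)) ^ card {(i,l),(j,l)})\<bar> \<ge> a}
     \<le> (\<Sum>l\<in>{1..N}. (integral\<^sup>L std_normal_distribution (\<lambda>t. t^2)) ^ card {(i,l),(j,l)}) / a\<^sup>2 \<and>
     {\<omega> \<in> space (gauss_space N).
        \<bar>(\<Sum>l\<in>{1..N}. \<Prod>x\<in>{(i,l),(j,l)}. \<omega> x) - (\<Sum>l\<in>{1..N}. (integral\<^sup>L std_normal_distribution (\<lambda>t. t)) ^ card {(i,l),(j,l)})\<bar> \<ge> a} \<in> sets (gauss_space N)"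
    unfolding gauss_space_def
    by (rule colvar[of "{1..N}\<times>{1..N}" "{1..N}" "\<lambda>l. {(i,l),(j,l)}" "\<lambda>t. t", OF _ _ SI dj _ ni_id _ assms(4)])
       (auto simp: ni_2)
  then show ?thesis using assms(3) by (simp add: nm_id1 nm_2 ipN_def yvec_def)
qed

lemma gram_diag:
  assumes "i \<in> {1..N}" "a > 0"
  shows "measure (gauss_space N) {\<omega> \<in> space (gauss_space N). \<bar>ipN N (yvec \<omega> i) (yvec \<omega> i) - real N\<bar> \<ge> a}
     \<le> 3 * real N / a\<^sup>2 \<and> {\<omega> \<in> space (gauss_space N). \<bar>ipN N (yvec \<omega> i) (yvec \<omega> i) - real N\<bar> \<ge> a} \<in> sets (gauss_space N)"
proof -
  have SI: "\<And>l. l \<in> {1..N} \<Longrightarrow> {(i,l)} \<subseteq> {1..N}\<times>{1..N}" using assms by auto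
  have dj: "disjoint_family_on (\<lambda>l. {(i,l)}) {1..N}" by (auto simp: disjoint_family_on_def)
  have "measure (gauss_space N) {\<omega> \<in> space (gauss_space N).
        \<bar>(\<Sum>l\<in>{1..N}. \<Prod>x\<in>{(i,l)}. (\<omega> x)^2) - (\<Sum>l\<in>{1..N}. (integral\<^sup>L std_normal_distribution (\<lambda>t. t^2)) ^ card {(i,l)})\<bar> \<ge> a}
     \<le> (\<Sum>l\<in>{1..N}. (integral\<^sup>L std_normal_distribution (\<lambda>t. (t^2)^2)) ^ card {(i,l)}) / a\<^sup>2 \<and>
     {\<omega> \<in> space (gauss_space N).
        \<bar>(\<Sum>l\<in>{1..N}. \<Prod>x\<in>{(i,l)}. (\<omega> x)^2) - (\<Sum>l\<in>{1..N}. (integral\<^sup>L std_normal_distribution (\<lambda>t. t^2)) ^ card {(i,l)})\<bar> \<ge> a} \<in> sets (gauss_space N)"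
    unfolding gauss_space_def
    by (rule colvar[of "{1..N}\<times>{1..N}" "{1..N}" "\<lambda>l. {(i,l)}" "\<lambda>t. t^2", OF _ _ SI dj _ ni_2 _ assms(2)])
       (auto simp: ni_4 integrable_std_normal_distribution_moment)
  then show ?thesis by (simp only: nm_4 nm_2) (simp add: ipN_def yvec_def power2_eq_square mult.commute)
qed

lemma std_density_lb: "\<bar>x\<bar> \<le> 1 \<Longrightarrow> std_normal_density x \<ge> 1/6"
proof -
  assume x: "\<bar>x\<bar> \<le> 1"
  have "\<bar>x\<bar>^2 \<le> 1^2" using x by (intro power_mono) auto
  then have "x^2 \<le> 1" by simp
  then have e: "exp (- x\<^sup>2 / 2) \<ge> 1/2"
    using exp_ge_add_one_self[of "- x\<^sup>2 / 2"] by linarith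
  have "2 * pi \<le> 9" using pi_less_4 by linarith
  then have "sqrt (2 * pi) \<le> sqrt 9" by (rule real_sqrt_le_mono)
  moreover have "sqrt 9 = (3::real)" using real_sqrt_abs[of 3] by simp
  ultimately have s: "sqrt (2 * pi) \<le> 3" by simp
  have sp: "sqrt (2*pi) > 0" by simp
  have "1/6 \<le> (1 / sqrt (2 * pi)) * (1/2)"
    using s sp by (simp add: field_simps)
  also have "\<dots> \<le> (1 / sqrt (2 * pi)) * exp (- x\<^sup>2 / 2)"
    using e sp by (intro mult_left_mono) auto
  finally show ?thesis by (simp add: std_normal_density_def)
qed

lemma normal_interval_lb:
  assumes "0 \<le> u" "u \<le> 1"
  shows "measure std_normal_distribution {-u..u} \<ge> u / 3"
proof -
  interpret P: prob_space std_normal_distribution by (rule ps_normal)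
  have "ennreal (u/3) = ennreal (1/6) * ennreal (2*u)"
    using assms by (simp add: ennreal_mult[symmetric])
  also have "\<dots> = (\<integral>\<^sup>+ x. ennreal (1/6) * indicator {-u..u} x \<partial>lborel)"
    using assms by (simp add: nn_integral_cmult_indicator)
  also have "\<dots> \<le> (\<integral>\<^sup>+ x. ennreal (std_normal_density x) * indicator {-u..u} x \<partial>lborel)"
    using assms std_density_lb by (intro nn_integral_mono) (auto simp: indicator_def)
  also have "\<dots> = emeasure std_normal_distribution {-u..u}"
    by (subst emeasure_density) auto
  finally have "ennreal (u/3) \<le> emeasure std_normal_distribution {-u..u}" .
  then show ?thesis
    using assms by (simp add: P.emeasure_eq_measure)
qed

lemma count_bound:
  assumes k: "1 \<le> k" "k \<le> N" and u: "0 < u" "u \<le> 1"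
  shows "\<exists>B. B \<in> sets (gauss_space N) \<and>
     {\<omega> \<in> space (gauss_space N). \<forall>l\<in>{1..N}. \<exists>i\<in>{1..k}. \<bar>\<omega> (i,l)\<bar> > u} \<subseteq> B \<and>
     measure (gauss_space N) B \<le> (3/u)^k / real N"
proof -
  interpret P: prob_space std_normal_distribution by (rule ps_normal)
  define q where "q = measure std_normal_distribution {-u..u}"
  have q3: "q \<ge> u/3" unfolding q_def using normal_interval_lb u by auto
  have qpos: "q > 0" using q3 u by linarith
  have Npos: "real N > 0" using k by auto
  define h :: "real \<Rightarrow> real" where "h = indicator {-u..u}"
  have hm: "h \<in> borel_measurable borel" unfolding h_def by simp
  have hi: "integrable std_normal_distribution h" unfolding h_def
    by (rule integrable_real_indicator) (auto simp: P.emeasure_eq_measure)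
  have h2: "(\<lambda>t. (h t)^2) = h" by (auto simp: h_def indicator_def fun_eq_iff)
  have hI: "integral\<^sup>L std_normal_distribution h = q" unfolding h_def q_def by simp
  define S where "S l = (\<lambda>i. (i,l)) ` {1..k}" for l :: nat
  have cardS: "card (S l) = k" for l unfolding S_def by (subst card_image) (auto simp: inj_on_def)
  have SI: "\<And>l. l \<in> {1..N} \<Longrightarrow> S l \<subseteq> {1..N}\<times>{1..N}" using k by (auto simp: S_def)
  have dj: "disjoint_family_on S {1..N}" by (auto simp: disjoint_family_on_def S_def)
  define a where "a = real N * q^k"
  have apos: "a > 0" unfolding a_def using Npos qpos by simp
  define B where "B = {\<omega> \<in> space (gauss_space N).
        \<bar>(\<Sum>l\<in>{1..N}. \<Prod>x\<in>S l. h (\<omega> x)) - (\<Sum>l\<in>{1..N}. (integral\<^sup>L std_normal_distribution h) ^ card (S l))\<bar> \<ge> a}"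
  have cv: "measure (gauss_space N) B \<le> (\<Sum>l\<in>{1..N}. (integral\<^sup>L std_normal_distribution (\<lambda>t. (h t)^2)) ^ card (S l)) / a\<^sup>2
     \<and> B \<in> sets (gauss_space N)"
    unfolding gauss_space_def B_def
    by (rule colvar[of "{1..N}\<times>{1..N}" "{1..N}" S h a, OF _ _ SI dj hm hi _ apos]) (simp_all add: h2 hi)
  have "(\<Sum>l\<in>{1..N}. (integral\<^sup>L std_normal_distribution (\<lambda>t. (h t)^2)) ^ card (S l)) / a\<^sup>2
      = 1 / (real N * q^k)"
    unfolding h2 hI cardS a_def using Npos qpos by (simp add: power2_eq_square)
  also have "\<dots> \<le> 1 / (real N * (u/3)^k)"
  proof -
    have "real N * (u/3)^k \<le> real N * q^k"
      using Npos q3 u by (intro mult_left_mono power_mono) auto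
    moreover have "0 < real N * (u/3)^k" using Npos u by simp
    ultimately show ?thesis by (intro divide_left_mono) auto
  qed
  also have "\<dots> = (3/u)^k / real N"
    using u by (simp add: power_divide)
  finally have mB: "measure (gauss_space N) B \<le> (3/u)^k / real N" using cv by linarith
  have sub: "{\<omega> \<in> space (gauss_space N). \<forall>l\<in>{1..N}. \<exists>i\<in>{1..k}. \<bar>\<omega> (i,l)\<bar> > u} \<subseteq> B"
  proof
    fix \<omega> assume "\<omega> \<in> {\<omega> \<in> space (gauss_space N). \<forall>l\<in>{1..N}. \<exists>i\<in>{1..k}. \<bar>\<omega> (i,l)\<bar> > u}"
    then have sp: "\<omega> \<in> space (gauss_space N)" and al: "\<forall>l\<in>{1..N}. \<exists>i\<in>{1..k}. \<bar>\<omega> (i,l)\<bar> > u" by auto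
    have "(\<Prod>x\<in>S l. h (\<omega> x)) = 0" if lN: "l \<in> {1..N}" for l
    proof -
      obtain i where "i \<in> {1..k}" "\<bar>\<omega> (i,l)\<bar> > u" using al lN by blast
      then show ?thesis unfolding S_def
        by (intro prod_zero) (auto simp: h_def indicator_def intro!: bexI[of _ i])
    qed
    then have "(\<Sum>l\<in>{1..N}. \<Prod>x\<in>S l. h (\<omega> x)) = 0" by simp
    then show "\<omega> \<in> B" using sp unfolding B_def a_def hI cardS using qpos by (simp add: abs_mult)
  qed
  show ?thesis
    apply (rule exI[of _ B])
    using cv mB sub by simp
qed

declare gs.simps[simp del]

lemma gs_eq: "gs N y i l = y i l - (\<Sum>j\<in>{1..<i}.
       (ipN N (y i) (gs N y j) / ipN N (gs N y j) (gs N y j)) * gs N y j l)"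
  by (simp only: gs.simps[of N y i])

lemma ipN_comm: "ipN N u v = ipN N v u"
  unfolding ipN_def by (simp add: mult.commute)

lemma ipN_lin: "finite J \<Longrightarrow> ipN N (\<lambda>l. u l - (\<Sum>j\<in>J. c j * v j l)) z
   = ipN N u z - (\<Sum>j\<in>J. c j * ipN N (v j) z)"
proof -
  have "(\<Sum>l\<in>{1..N}. (\<Sum>j\<in>J. c j * v j l) * z l) = (\<Sum>l\<in>{1..N}. \<Sum>j\<in>J. c j * (v j l * z l))"
    by (simp add: sum_distrib_right mult.assoc)
  also have "\<dots> = (\<Sum>j\<in>J. \<Sum>l\<in>{1..N}. c j * (v j l * z l))"
    by (rule sum.swap)
  also have "\<dots> = (\<Sum>j\<in>J. c j * (\<Sum>l\<in>{1..N}. v j l * z l))"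
    by (simp add: sum_distrib_left)
  finally have e: "(\<Sum>l\<in>{1..N}. (\<Sum>j\<in>J. c j * v j l) * z l) = (\<Sum>j\<in>J. c j * (\<Sum>l\<in>{1..N}. v j l * z l))" .
  show ?thesis unfolding ipN_def
    by (simp only: left_diff_distrib sum_subtractf e)
qed

lemma ip_gs: "ipN N (gs N y i) z = ipN N (y i) z -
   (\<Sum>j\<in>{1..<i}. (ipN N (y i) (gs N y j) / ipN N (gs N y j) (gs N y j)) * ipN N (gs N y j) z)"
proof -
  have "gs N y i = (\<lambda>l. y i l - (\<Sum>j\<in>{1..<i}.
       (ipN N (y i) (gs N y j) / ipN N (gs N y j) (gs N y j)) * gs N y j l))"
    by (rule ext) (rule gs_eq)
  then show ?thesis by (simp only: ipN_lin[OF finite_atLeastLessThan])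
qed

lemma gs_orth:
  assumes nz: "\<And>m. m \<in> {1..<K} \<Longrightarrow> ipN N (gs N y m) (gs N y m) \<noteq> 0"
  shows "i \<le> K \<Longrightarrow> 1 \<le> m \<Longrightarrow> m < i \<Longrightarrow> ipN N (gs N y i) (gs N y m) = 0"
proof (induction i arbitrary: m rule: less_induct)
  case (less i)
  let ?w = "gs N y"
  let ?c = "\<lambda>j. ipN N (y i) (?w j) / ipN N (?w j) (?w j)"
  have z: "ipN N (?w j) (?w m) = 0" if "j \<in> {1..<i}" "j \<noteq> m" for j
  proof (cases "j < m")
    case True
    then have "ipN N (?w m) (?w j) = 0" using less.IH[of m j] less.prems that by auto
    then show ?thesis by (simp add: ipN_comm)
  next
    case False
    then show ?thesis using less.IH[of j m] less.prems that by auto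
  qed
  have "(\<Sum>j\<in>{1..<i}. ?c j * ipN N (?w j) (?w m)) = (\<Sum>j\<in>{1..<i}. if j = m then ?c m * ipN N (?w m) (?w m) else 0)"
    using z by (intro sum.cong) auto
  also have "\<dots> = ?c m * ipN N (?w m) (?w m)" using less.prems by simp
  also have "\<dots> = ipN N (y i) (?w m)" using nz[of m] less.prems by simp
  finally show ?case by (simp only: ip_gs[of N y i])
qed

lemma geom2: "1 \<le> i \<Longrightarrow> (\<Sum>m\<in>{1..<i}. (2::real)^(m-1)) = 2^(i-1) - 1"
proof (induction i)
  case 0 then show ?case by simp
next
  case (Suc i)
  show ?case
  proof (cases "i = 0")
    case True then show ?thesis by simp
  next
    case False
    then have "(\<Sum>m\<in>{1..<Suc i}. (2::real)^(m-1)) = (\<Sum>m\<in>{1..<i}. (2::real)^(m-1)) + 2^(i-1)"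
      by simp
    also have "\<dots> = 2^(i-1) - 1 + 2^(i-1)" using Suc False by simp
    also have "\<dots> = 2^i - 1" using False by (cases i) auto
    finally show ?thesis by simp
  qed
qed

lemma gs_quant:
  fixes y :: "nat \<Rightarrow> nat \<Rightarrow> real"
  assumes Npos: "real N > 0" and eta: "0 \<le> \<eta>" "2^k * \<eta> \<le> 1/2"
    and G: "\<And>p i. p \<in> {1..k} \<Longrightarrow> i \<in> {1..k} \<Longrightarrow>
        \<bar>ipN N (y p) (y i) - (if p = i then real N else 0)\<bar> \<le> \<eta> * N"
  shows "i \<in> {1..k} \<Longrightarrow> (\<forall>p\<in>{i..k}. \<bar>ipN N (y p) (gs N y i) - (if p = i then real N else 0)\<bar> \<le> 2^(i-1) * \<eta> * N)
      \<and> ipN N (gs N y i) (gs N y i) = ipN N (y i) (gs N y i)"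
proof (induction i rule: less_induct)
  case (less i)
  let ?w = "gs N y"
  let ?c = "\<lambda>j. ipN N (y i) (?w j) / ipN N (?w j) (?w j)"
  have pw: "(2::real)^(m-1) * \<eta> \<le> 1/2" if "m \<in> {1..k}" for m
  proof -
    have "(2::real)^(m-1) \<le> 2^k" using that by (intro power_increasing) auto
    then have "(2::real)^(m-1) * \<eta> \<le> 2^k * \<eta>" using eta by (intro mult_right_mono) auto
    then show ?thesis using eta by linarith
  qed
  have IHm: "\<forall>p\<in>{m..k}. \<bar>ipN N (y p) (?w m) - (if p = m then real N else 0)\<bar> \<le> 2^(m-1) * \<eta> * N"
     and IHo: "ipN N (?w m) (?w m) = ipN N (y m) (?w m)" if "m \<in> {1..<i}" for m
    using less.IH[of m] that less.prems by auto
  have nm: "ipN N (?w m) (?w m) \<ge> real N / 2" if m: "m \<in> {1..<i}" for m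
  proof -
    have mm: "m \<in> {m..k}" using m less.prems by auto
    have "\<bar>ipN N (y m) (?w m) - real N\<bar> \<le> 2^(m-1) * \<eta> * N" using bspec[OF IHm[OF m] mm] by simp
    moreover have "2^(m-1) * \<eta> * N \<le> 1/2 * N" using pw[of m] m less.prems Npos by (intro mult_right_mono) auto
    ultimately show ?thesis using IHo[OF m] by linarith
  qed
  have offm: "\<bar>ipN N (y p) (?w m)\<bar> \<le> 2^(m-1) * \<eta> * N" if m: "m \<in> {1..<i}" and p: "p \<in> {i..k}" for m p
  proof -
    have pm: "p \<in> {m..k}" "p \<noteq> m" using m p by auto
    show ?thesis using bspec[OF IHm[OF m] pm(1)] pm(2) by simp
  qed
  have cb: "\<bar>?c m\<bar> \<le> 1" if m: "m \<in> {1..<i}" for m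
  proof -
    have np: "ipN N (?w m) (?w m) > 0" using nm[OF m] Npos by linarith
    have "\<bar>ipN N (y i) (?w m)\<bar> \<le> 2^(m-1) * \<eta> * N" using offm[OF m, of i] less.prems by auto
    also have "\<dots> \<le> 1/2 * N" using pw[of m] m less.prems Npos by (intro mult_right_mono) auto
    also have "\<dots> \<le> ipN N (?w m) (?w m)" using nm[OF m] by simp
    finally have f: "\<bar>ipN N (y i) (?w m)\<bar> \<le> ipN N (?w m) (?w m)" .
    show ?thesis by (simp only: abs_divide abs_of_pos[OF np] divide_le_eq_1_pos[OF np] f)
  qed
  have part1: "\<bar>ipN N (y p) (?w i) - (if p = i then real N else 0)\<bar> \<le> 2^(i-1) * \<eta> * N" if p: "p \<in> {i..k}" for p
  proof -
    have e: "ipN N (y p) (?w i) = ipN N (y i) (y p) - (\<Sum>m\<in>{1..<i}. ?c m * ipN N (?w m) (y p))"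
      by (simp only: ipN_comm[of N "y p" "gs N y i"] ip_gs[of N y i])
    have "\<bar>\<Sum>m\<in>{1..<i}. ?c m * ipN N (?w m) (y p)\<bar> \<le> (\<Sum>m\<in>{1..<i}. \<bar>?c m * ipN N (?w m) (y p)\<bar>)"
      by (rule sum_abs)
    also have "\<dots> \<le> (\<Sum>m\<in>{1..<i}. 2^(m-1) * \<eta> * N)"
    proof (rule sum_mono)
      fix m assume m: "m \<in> {1..<i}"
      have "\<bar>?c m * ipN N (?w m) (y p)\<bar> = \<bar>?c m\<bar> * \<bar>ipN N (y p) (?w m)\<bar>"
        by (simp add: abs_mult ipN_comm[of N "?w m" "y p"])
      also have "\<dots> \<le> 1 * (2^(m-1) * \<eta> * N)"
        using cb[OF m] offm[OF m p] by (intro mult_mono) auto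
      finally show "\<bar>?c m * ipN N (?w m) (y p)\<bar> \<le> 2^(m-1) * \<eta> * N" by simp
    qed
    also have "\<dots> = (\<Sum>m\<in>{1..<i}. (2::real)^(m-1)) * \<eta> * N"
      by (simp add: sum_distrib_right)
    also have "\<dots> = (2^(i-1) - 1) * \<eta> * N" using geom2[of i] less.prems by simp
    finally have s: "\<bar>\<Sum>m\<in>{1..<i}. ?c m * ipN N (?w m) (y p)\<bar> \<le> (2^(i-1) - 1) * \<eta> * N" .
    have g: "\<bar>ipN N (y i) (y p) - (if p = i then real N else 0)\<bar> \<le> \<eta> * N"
      using G[of i p] p less.prems by (auto simp: ipN_comm[of N "y i" "y p"] split: if_splits)
    have "(2::real)^(i-1) * \<eta> * N = \<eta> * N + (2^(i-1) - 1) * \<eta> * N" by (simp add: algebra_simps)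
    then show ?thesis using e s g by (smt (verit))
  qed
  have part2: "ipN N (?w i) (?w i) = ipN N (y i) (?w i)"
  proof -
    have nz: "ipN N (?w m) (?w m) \<noteq> 0" if "m \<in> {1..<i}" for m using nm[OF that] Npos by linarith
    have o: "ipN N (?w m) (?w i) = 0" if m: "m \<in> {1..<i}" for m
      using gs_orth[of i N y i m, OF nz] m by (simp add: ipN_comm[of N "?w m" "?w i"])
    show ?thesis by (simp only: ip_gs[of N y i]) (simp add: o)
  qed
  show ?case using part1 part2 by blast
qed

lemma min_close:
  fixes f g :: "nat \<Rightarrow> real"
  assumes J: "finite J" "j0 \<in> J" and g0: "\<And>j. j \<in> J \<Longrightarrow> 0 \<le> g j"
    and fg: "\<And>j. j \<in> J \<Longrightarrow> \<bar>f j - g j\<bar> \<le> \<delta> * g j" and d: "0 \<le> \<delta>" "\<delta> \<le> 1/2"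
  shows "\<bar>Min (f ` J) - Min (g ` J)\<bar> \<le> 3 * \<delta> * g j0"
proof -
  have ne: "J \<noteq> {}" using J by auto
  have "Min (g ` J) \<in> g ` J" using J ne by (intro Min_in) auto
  then obtain jg where jg: "jg \<in> J" "g jg = Min (g ` J)" by (auto simp: image_iff)
  have "Min (f ` J) \<in> f ` J" using J ne by (intro Min_in) auto
  then obtain jf where jf: "jf \<in> J" "f jf = Min (f ` J)" by (auto simp: image_iff)
  have mf: "Min (f ` J) \<le> f j" if "j \<in> J" for j using J that by simp
  have mg: "Min (g ` J) \<le> g j" if "j \<in> J" for j using J that by simp
  have a1: "f jg \<le> g jg + \<delta> * g jg" using fg[OF jg(1)] by linarith
  have a2: "\<delta> * g jg \<le> \<delta> * g j0" using mg[OF J(2)] jg d by (intro mult_left_mono) auto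
  have up: "Min (f ` J) - Min (g ` J) \<le> 3 * \<delta> * g j0"
  proof -
    have "Min (f ` J) - Min (g ` J) \<le> \<delta> * g j0" using mf[OF jg(1)] jg a1 a2 by linarith
    moreover have "\<delta> * g j0 \<le> 3 * \<delta> * g j0" using d g0[OF J(2)] by (simp add: mult_nonneg_nonneg)
    ultimately show ?thesis by linarith
  qed
  have b1: "f jf \<ge> g jf - \<delta> * g jf" using fg[OF jf(1)] by linarith
  have b2: "f jf \<le> f j0" using mf[OF J(2)] jf by simp
  have b3: "f j0 \<le> g j0 + \<delta> * g j0" using fg[OF J(2)] by linarith
  have b4: "\<delta> * g jf \<le> 1/2 * g jf" using d g0[OF jf(1)] by (intro mult_right_mono) auto
  have b5: "\<delta> * g j0 \<le> 1/2 * g j0" using d g0[OF J(2)] by (intro mult_right_mono) auto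
  have gg: "g jf \<le> 3 * g j0" using b1 b2 b3 b4 b5 by linarith
  have b6: "\<delta> * g jf \<le> \<delta> * (3 * g j0)" using gg d by (intro mult_left_mono) auto
  have lo: "Min (g ` J) - Min (f ` J) \<le> 3 * \<delta> * g j0"
    using mg[OF jf(1)] jf b1 b6 by linarith
  show ?thesis using up lo by linarith
qed

context
  fixes y :: "nat \<Rightarrow> nat \<Rightarrow> real" and N k :: nat and \<eta> :: real
  assumes Npos: "real N > 0" and eta: "0 \<le> \<eta>" "2^k * \<eta> \<le> 1/2"
    and G: "\<And>p i. p \<in> {1..k} \<Longrightarrow> i \<in> {1..k} \<Longrightarrow>
        \<bar>ipN N (y p) (y i) - (if p = i then real N else 0)\<bar> \<le> \<eta> * N"
begin

lemma pw2: "m \<in> {1..k} \<Longrightarrow> (2::real)^(m-1) * \<eta> \<le> 1/2"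
proof -
  assume m: "m \<in> {1..k}"
  have "(2::real)^(m-1) \<le> 2^k" using m by (intro power_increasing) auto
  then have "(2::real)^(m-1) * \<eta> \<le> 2^k * \<eta>" using eta by (intro mult_right_mono) auto
  then show ?thesis using eta by linarith
qed

lemma nm_close: "i \<in> {1..k} \<Longrightarrow> \<bar>ipN N (gs N y i) (gs N y i) - real N\<bar> \<le> 2^(i-1) * \<eta> * N"
proof -
  assume i: "i \<in> {1..k}"
  have q: "(\<forall>p\<in>{i..k}. \<bar>ipN N (y p) (gs N y i) - (if p = i then real N else 0)\<bar> \<le> 2^(i-1) * \<eta> * N)
      \<and> ipN N (gs N y i) (gs N y i) = ipN N (y i) (gs N y i)"
    by (rule gs_quant[OF Npos eta G i]) auto
  have ii: "i \<in> {i..k}" using i by auto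
  show ?thesis using bspec[OF conjunct1[OF q] ii] conjunct2[OF q] by simp
qed

lemma nm_ge: "i \<in> {1..k} \<Longrightarrow> ipN N (gs N y i) (gs N y i) \<ge> real N / 2"
proof -
  assume i: "i \<in> {1..k}"
  have "2^(i-1) * \<eta> * N \<le> 1/2 * N" using pw2[OF i] Npos by (intro mult_right_mono) auto
  then show ?thesis using nm_close[OF i] by linarith
qed

lemma c_le1: "i \<in> {1..k} \<Longrightarrow> m \<in> {1..<i} \<Longrightarrow>
   \<bar>ipN N (y i) (gs N y m) / ipN N (gs N y m) (gs N y m)\<bar> \<le> 1"
proof -
  assume i: "i \<in> {1..k}" and m: "m \<in> {1..<i}"
  have mk: "m \<in> {1..k}" using i m by auto
  have q: "(\<forall>p\<in>{m..k}. \<bar>ipN N (y p) (gs N y m) - (if p = m then real N else 0)\<bar> \<le> 2^(m-1) * \<eta> * N)"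
    using gs_quant[OF Npos eta G mk] by blast
  have im: "i \<in> {m..k}" "i \<noteq> m" using i m by auto
  have np: "ipN N (gs N y m) (gs N y m) > 0" using nm_ge[OF mk] Npos by linarith
  have "\<bar>ipN N (y i) (gs N y m)\<bar> \<le> 2^(m-1) * \<eta> * N" using bspec[OF q im(1)] im(2) by simp
  also have "\<dots> \<le> 1/2 * N" using pw2[OF mk] Npos by (intro mult_right_mono) auto
  also have "\<dots> \<le> ipN N (gs N y m) (gs N y m)" using nm_ge[OF mk] by simp
  finally have f: "\<bar>ipN N (y i) (gs N y m)\<bar> \<le> ipN N (gs N y m) (gs N y m)" .
  show ?thesis by (simp only: abs_divide abs_of_pos[OF np] divide_le_eq_1_pos[OF np] f)
qed

lemma entry_bound: "i \<in> {1..k} \<Longrightarrow> \<bar>gs N y i l\<bar> \<le> 2^(i-1) * (\<Sum>p\<in>{1..k}. \<bar>y p l\<bar>)"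
proof (induction i rule: less_induct)
  case (less i)
  let ?T = "\<Sum>p\<in>{1..k}. \<bar>y p l\<bar>"
  let ?c = "\<lambda>j. ipN N (y i) (gs N y j) / ipN N (gs N y j) (gs N y j)"
  have T0: "0 \<le> ?T" by (simp add: sum_nonneg)
  have yT: "\<bar>y i l\<bar> \<le> ?T" using less.prems by (intro member_le_sum) auto
  have "\<bar>\<Sum>j\<in>{1..<i}. ?c j * gs N y j l\<bar> \<le> (\<Sum>j\<in>{1..<i}. \<bar>?c j * gs N y j l\<bar>)" by (rule sum_abs)
  also have "\<dots> \<le> (\<Sum>j\<in>{1..<i}. 2^(j-1) * ?T)"
  proof (rule sum_mono)
    fix j assume j: "j \<in> {1..<i}"
    have jk: "j \<in> {1..k}" using j less.prems by auto
    have "\<bar>?c j * gs N y j l\<bar> = \<bar>?c j\<bar> * \<bar>gs N y j l\<bar>" by (rule abs_mult)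
    also have "\<dots> \<le> 1 * (2^(j-1) * ?T)"
      using c_le1[OF less.prems j] less.IH[of j] j jk by (intro mult_mono) auto
    finally show "\<bar>?c j * gs N y j l\<bar> \<le> 2^(j-1) * ?T" by simp
  qed
  also have "\<dots> = (\<Sum>j\<in>{1..<i}. (2::real)^(j-1)) * ?T" by (simp add: sum_distrib_right)
  also have "\<dots> = (2^(i-1) - 1) * ?T" using geom2[of i] less.prems by simp
  finally have s: "\<bar>\<Sum>j\<in>{1..<i}. ?c j * gs N y j l\<bar> \<le> (2^(i-1) - 1) * ?T" .
  have e: "gs N y i l = y i l - (\<Sum>j\<in>{1..<i}. ?c j * gs N y j l)" by (rule gs_eq)
  have "(2::real)^(i-1) * ?T = ?T + (2^(i-1) - 1) * ?T" by (simp add: algebra_simps)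
  then show ?case using e s yT by (smt (verit))
qed

end

context
  fixes y :: "nat \<Rightarrow> nat \<Rightarrow> real" and N k :: nat and \<eta> :: real
  assumes Npos: "real N > 0" and eta: "0 \<le> \<eta>" "2^k * \<eta> \<le> 1/2"
    and G: "\<And>p i. p \<in> {1..k} \<Longrightarrow> i \<in> {1..k} \<Longrightarrow>
        \<bar>ipN N (y p) (y i) - (if p = i then real N else 0)\<bar> \<le> \<eta> * N"
begin

lemma ratio_close:
  assumes i: "i \<in> {1..k}"
  shows "\<bar>real N / ipN N (gs N y i) (gs N y i) - 1\<bar> \<le> 2^k * \<eta>"
proof -
  let ?n = "ipN N (gs N y i) (gs N y i)"
  have ng: "?n \<ge> real N / 2" by (rule nm_ge[OF Npos eta G i])
  have np: "?n > 0" using ng Npos by linarith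
  have c: "\<bar>?n - real N\<bar> \<le> 2^(i-1) * \<eta> * N" by (rule nm_close[OF Npos eta G i])
  have "real N / ?n - 1 = (real N - ?n) / ?n" using np by (simp add: field_simps)
  then have "\<bar>real N / ?n - 1\<bar> = \<bar>real N - ?n\<bar> / ?n" using np by (simp add: abs_divide)
  also have "\<dots> \<le> (2^(i-1) * \<eta> * N) / (real N / 2)"
    using c np ng Npos by (intro frac_le) (auto simp: abs_minus_commute)
  also have "\<dots> = 2^(i-1) * 2 * \<eta>" using Npos by (simp add: field_simps)
  also have "\<dots> = 2^i * \<eta>" using i by (cases i) auto
  also have "\<dots> \<le> 2^k * \<eta>" using i eta by (intro mult_right_mono power_increasing) auto
  finally show ?thesis .
qed

lemma gsn_sq:
  assumes i: "i \<in> {1..k}"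
  shows "(sqrt (real N) * gsn N y i j)^2 = (real N / ipN N (gs N y i) (gs N y i)) * (gs N y i j)^2"
proof -
  let ?n = "ipN N (gs N y i) (gs N y i)"
  have np: "?n > 0" using nm_ge[OF Npos eta G i] Npos by linarith
  show ?thesis unfolding gsn_def using np Npos
    by (simp add: power_mult_distrib power_divide)
qed

lemma det_main:
  assumes a0: "\<And>i. i \<in> {1..k} \<Longrightarrow> 0 \<le> a i" and l0: "l0 \<in> {1..N}"
  shows "\<bar>(MIN j\<in>{1..N}. \<Sum>i=1..k. a i * (sqrt (real N) * gsn N y i j)\<^sup>2)
         - (MIN j\<in>{1..N}. \<Sum>i=1..k. a i * (gs N y i j)\<^sup>2)\<bar>
     \<le> 3 * (2^k * \<eta>) * ((\<Sum>i=1..k. a i) * 4^k * (\<Sum>p\<in>{1..k}. \<bar>y p l0\<bar>)^2)"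
proof -
  define \<delta> where "\<delta> = (2::real)^k * \<eta>"
  define r where "r i = real N / ipN N (gs N y i) (gs N y i)" for i
  define T where "T = (\<Sum>p\<in>{1..k}. \<bar>y p l0\<bar>)"
  let ?f = "\<lambda>j. \<Sum>i=1..k. a i * (sqrt (real N) * gsn N y i j)\<^sup>2"
  let ?g = "\<lambda>j. \<Sum>i=1..k. a i * (gs N y i j)\<^sup>2"
  have d0: "0 \<le> \<delta>" unfolding \<delta>_def using eta by simp
  have d1: "\<delta> \<le> 1/2" unfolding \<delta>_def using eta by simp
  have g0: "0 \<le> ?g j" for j using a0 by (intro sum_nonneg) auto
  have fg: "\<bar>?f j - ?g j\<bar> \<le> \<delta> * ?g j" for j
  proof -
    have fe: "?f j = (\<Sum>i=1..k. a i * (r i * (gs N y i j)\<^sup>2))"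
    proof (rule sum.cong[OF refl])
      fix i assume i: "i \<in> {1..k}"
      show "a i * (sqrt (real N) * gsn N y i j)\<^sup>2 = a i * (r i * (gs N y i j)\<^sup>2)"
        by (subst gsn_sq[OF i]) (simp add: r_def)
    qed
    have "?f j - ?g j = (\<Sum>i=1..k. a i * (r i - 1) * (gs N y i j)\<^sup>2)"
      unfolding fe by (simp add: sum_subtractf[symmetric] algebra_simps)
    then have "\<bar>?f j - ?g j\<bar> \<le> (\<Sum>i=1..k. \<bar>a i * (r i - 1) * (gs N y i j)\<^sup>2\<bar>)"
      by (simp add: sum_abs)
    also have "\<dots> \<le> (\<Sum>i=1..k. \<delta> * (a i * (gs N y i j)\<^sup>2))"
    proof (rule sum_mono)
      fix i assume i: "i \<in> {1..k}"
      have "\<bar>a i * (r i - 1) * (gs N y i j)\<^sup>2\<bar> = \<bar>r i - 1\<bar> * (a i * (gs N y i j)\<^sup>2)"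
        using a0[OF i] by (simp add: abs_mult)
      also have "\<dots> \<le> \<delta> * (a i * (gs N y i j)\<^sup>2)"
        using ratio_close[OF i] a0[OF i] unfolding r_def \<delta>_def by (intro mult_right_mono) auto
      finally show "\<bar>a i * (r i - 1) * (gs N y i j)\<^sup>2\<bar> \<le> \<delta> * (a i * (gs N y i j)\<^sup>2)" .
    qed
    also have "\<dots> = \<delta> * ?g j" by (simp add: sum_distrib_left)
    finally show ?thesis .
  qed
  have mc: "\<bar>Min (?f ` {1..N}) - Min (?g ` {1..N})\<bar> \<le> 3 * \<delta> * ?g l0"
    by (rule min_close[OF _ l0 _ _ d0 d1]) (simp, rule g0, rule fg)
  have gl: "?g l0 \<le> (\<Sum>i=1..k. a i) * 4^k * T^2"
  proof -
    have "?g l0 \<le> (\<Sum>i=1..k. a i * (4^k * T^2))"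
    proof (rule sum_mono)
      fix i assume i: "i \<in> {1..k}"
      have T0: "0 \<le> T" unfolding T_def by (simp add: sum_nonneg)
      have "\<bar>gs N y i l0\<bar> \<le> 2^(i-1) * T" unfolding T_def by (rule entry_bound[OF Npos eta G i])
      then have "\<bar>gs N y i l0\<bar>^2 \<le> (2^(i-1) * T)^2" by (intro power_mono) auto
      also have "\<dots> = 4^(i-1) * T^2"
      proof -
        have "((2::real)^(i-1))^2 = 4^(i-1)" by (simp add: power2_eq_square power_mult_distrib[symmetric])
        then show ?thesis by (simp add: power_mult_distrib)
      qed
      also have "\<dots> \<le> 4^k * T^2" using i by (intro mult_right_mono power_increasing) auto
      finally have "(gs N y i l0)^2 \<le> 4^k * T^2" by simp
      then show "a i * (gs N y i l0)\<^sup>2 \<le> a i * (4^k * T^2)" using a0[OF i] by (intro mult_left_mono) auto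
    qed
    also have "\<dots> = (\<Sum>i=1..k. a i) * 4^k * T^2" by (simp add: sum_distrib_right mult.assoc)
    finally show ?thesis .
  qed
  have "3 * \<delta> * ?g l0 \<le> 3 * \<delta> * ((\<Sum>i=1..k. a i) * 4^k * T^2)"
    using gl d0 by (intro mult_left_mono) auto
  then show ?thesis using mc unfolding \<delta>_def T_def by linarith
qed

end

lemma gram_any:
  assumes "p \<in> {1..N}" "i \<in> {1..N}" "b > 0"
  shows "measure (gauss_space N) {\<omega> \<in> space (gauss_space N).
      \<bar>ipN N (yvec \<omega> p) (yvec \<omega> i) - (if p = i then real N else 0)\<bar> \<ge> b} \<le> 3 * real N / b\<^sup>2
   \<and> {\<omega> \<in> space (gauss_space N).
      \<bar>ipN N (yvec \<omega> p) (yvec \<omega> i) - (if p = i then real N else 0)\<bar> \<ge> b} \<in> sets (gauss_space N)"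
proof (cases "p = i")
  case True
  then show ?thesis using gram_diag[OF assms(2) assms(3)] by simp
next
  case False
  have "real N / b\<^sup>2 \<le> 3 * real N / b\<^sup>2" by (simp add: divide_right_mono)
  then show ?thesis using gram_off[OF assms(1,2) False assms(3)] False by auto
qed

lemma pointwise:
  fixes a :: "nat \<Rightarrow> real" and \<omega> :: "nat \<times> nat \<Rightarrow> real"
  assumes k: "k \<ge> 1" and a: "\<And>i. i \<in> {1..k} \<Longrightarrow> a i > 0"
    and Npos: "real N > 0" and eta: "0 \<le> \<eta>" "2^k * \<eta> \<le> 1/2" and u: "0 \<le> u"
    and G: "\<And>p i. p \<in> {1..k} \<Longrightarrow> i \<in> {1..k} \<Longrightarrow>
        \<bar>ipN N (yvec \<omega> p) (yvec \<omega> i) - (if p = i then real N else 0)\<bar> \<le> \<eta> * N"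
    and l0: "l0 \<in> {1..N}" "\<And>i. i \<in> {1..k} \<Longrightarrow> \<bar>\<omega> (i, l0)\<bar> \<le> u"
    and K: "real N powr (2 / real k) * (3 * (2^k * \<eta>) * ((\<Sum>i=1..k. a i) * 4^k * (real k * u)^2)) \<le> \<epsilon>"
  shows "\<not> (\<bar>real N powr (2 / real k) *
          ((MIN j\<in>{1..N}. \<Sum>i=1..k. a i * (sqrt (real N) * gsn N (yvec \<omega>) i j)\<^sup>2)
         - (MIN j\<in>{1..N}. \<Sum>i=1..k. a i * (gs N (yvec \<omega>) i j)\<^sup>2))\<bar> > \<epsilon>)"
proof -
  let ?D = "(MIN j\<in>{1..N}. \<Sum>i=1..k. a i * (sqrt (real N) * gsn N (yvec \<omega>) i j)\<^sup>2)
         - (MIN j\<in>{1..N}. \<Sum>i=1..k. a i * (gs N (yvec \<omega>) i j)\<^sup>2)"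
  define T where "T = (\<Sum>p\<in>{1..k}. \<bar>yvec \<omega> p l0\<bar>)"
  have dm: "\<bar>?D\<bar> \<le> 3 * (2^k * \<eta>) * ((\<Sum>i=1..k. a i) * 4^k * T^2)"
    unfolding T_def using a by (intro det_main[OF Npos eta G _ l0(1)]) (auto simp: less_imp_le)
  have T0: "0 \<le> T" unfolding T_def by (simp add: sum_nonneg)
  have Tu: "T \<le> real k * u"
  proof -
    have "T \<le> (\<Sum>p\<in>{1..k}. u)" unfolding T_def yvec_def using l0(2) by (intro sum_mono) auto
    then show ?thesis by simp
  qed
  have T2: "T^2 \<le> (real k * u)^2" using T0 Tu by (intro power_mono) auto
  have A0: "0 \<le> (\<Sum>i=1..k. a i)" using a by (intro sum_nonneg) (auto simp: less_imp_le)
  have "(\<Sum>i=1..k. a i) * 4^k * T^2 \<le> (\<Sum>i=1..k. a i) * 4^k * (real k * u)^2"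
    by (rule mult_left_mono[OF T2]) (use A0 in simp)
  then have "3 * (2^k * \<eta>) * ((\<Sum>i=1..k. a i) * 4^k * T^2) \<le> 3 * (2^k * \<eta>) * ((\<Sum>i=1..k. a i) * 4^k * (real k * u)^2)"
    by (rule mult_left_mono) (use eta in simp)
  then have dm2: "\<bar>?D\<bar> \<le> 3 * (2^k * \<eta>) * ((\<Sum>i=1..k. a i) * 4^k * (real k * u)^2)" using dm by linarith
  have pp: "0 \<le> real N powr (2 / real k)" by simp
  have "\<bar>real N powr (2 / real k) * ?D\<bar> = real N powr (2 / real k) * \<bar>?D\<bar>" by (simp only: abs_mult abs_of_nonneg[OF pp])
  also have "\<dots> \<le> real N powr (2 / real k) * (3 * (2^k * \<eta>) * ((\<Sum>i=1..k. a i) * 4^k * (real k * u)^2))"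
    by (rule mult_left_mono[OF dm2 pp])
  also have "\<dots> \<le> \<epsilon>" by (rule K)
  finally show ?thesis by linarith
qed

lemma K_cond:
  fixes N k :: nat and c A \<epsilon> :: real
  assumes N: "real N \<ge> 1" and k: "k \<ge> 1" and c: "0 \<le> c" and A: "0 \<le> A"
    and KC: "3 * 8^k * A * (real k)^2 * c^2 \<le> \<epsilon>"
  shows "real N powr (2 / real k) * (3 * (2^k * real N powr (-1/4)) *
          (A * 4^k * (real k * (c * real N powr (-7 / (8 * real k))))^2)) \<le> \<epsilon>"
proof -
  define P where "P = real N powr (-7 / (8 * real k))"
  define Q where "Q = real N powr (2 / real k) * real N powr (-1/4) * P^2"
  have Npos: "real N > 0" using N by simp
  have "P^2 = real N powr (real 2 * (-7 / (8 * real k)))"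
    unfolding P_def by (rule powr_power) (use Npos in simp)
  also have "real 2 * (-7 / (8 * real k)) = -7 / (4 * real k)" by simp
  finally have P2: "P^2 = real N powr (-7 / (4 * real k))" .
  have "Q = real N powr (2 / real k + (-1/4) + (-7 / (4 * real k)))"
    unfolding Q_def P2 by (simp only: powr_add)
  also have "2 / real k + (-1/4) + (-7 / (4 * real k)) = (1 / real k - 1) / 4"
    using k by (simp add: field_simps)
  also have "real N powr ((1 / real k - 1) / 4) \<le> real N powr 0"
  proof (rule powr_mono[OF _ N])
    have "1 / real k \<le> 1" using k by simp
    then show "(1 / real k - 1) / 4 \<le> 0" by simp
  qed
  also have "real N powr 0 = 1" using Npos by simp
  finally have Q1: "Q \<le> 1" .
  have e8: "(8::real)^k = 2^k * 4^k" by (simp add: power_mult_distrib[symmetric])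
  have "real N powr (2 / real k) * (3 * (2^k * real N powr (-1/4)) *
          (A * 4^k * (real k * (c * P))^2)) = (3 * 8^k * A * (real k)^2 * c^2) * Q"
    unfolding Q_def e8 power_mult_distrib by (simp only: ac_simps)
  also have "\<dots> \<le> (3 * 8^k * A * (real k)^2 * c^2) * 1"
    using Q1 A by (intro mult_left_mono) auto
  also have "\<dots> \<le> \<epsilon>" using KC by simp
  finally show ?thesis unfolding P_def .
qed

lemma lim1: "(\<lambda>N::nat. 3 * real N / (real N powr (-1/4) * real N)^2) \<longlonglongrightarrow> 0"
  by real_asymp

lemma lim2: "(\<lambda>N::nat. real N powr (7/8) / real N) \<longlonglongrightarrow> 0"
  by real_asymp

lemma second_eq:
  fixes N k :: nat and c :: real
  assumes N: "real N \<ge> 1" and k: "k \<ge> 1" and c: "0 < c"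
  shows "(3 / (c * real N powr (-7 / (8 * real k))))^k / real N = (3/c)^k * (real N powr (7/8) / real N)"
proof -
  have Npos: "real N > 0" using N by simp
  have "(real N powr (-7 / (8 * real k)))^k = real N powr (real k * (-7 / (8 * real k)))"
    by (rule powr_power) (use Npos in simp)
  also have "real k * (-7 / (8 * real k)) = - (7/8)" using k by (simp add: field_simps)
  also have "real N powr (- (7/8)) = 1 / real N powr (7/8)" by (rule powr_minus_divide)
  finally have Pk: "(real N powr (-7 / (8 * real k)))^k = 1 / real N powr (7/8)" .
  have "(3 / (c * real N powr (-7 / (8 * real k))))^k = 3^k / (c^k * (real N powr (-7 / (8 * real k)))^k)"
    by (simp only: power_divide power_mult_distrib)
  also have "\<dots> = (3/c)^k * real N powr (7/8)"
    unfolding Pk using Npos c by (simp add: power_divide)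
  finally show ?thesis by simp
qed

lemma measure_le_sets:
  assumes "prob_space M" "U \<in> sets M" "S \<subseteq> U"
  shows "measure M S \<le> measure M U"
proof (cases "S \<in> sets M")
  case True
  interpret prob_space M by fact
  show ?thesis using True assms by (intro finite_measure_mono) auto
next
  case False
  then show ?thesis by (simp add: measure_notin_sets)
qed

lemma measure_bound:
  fixes k N :: nat and a :: "nat \<Rightarrow> real" and c \<epsilon> :: real
  assumes k: "k \<ge> 1" and a: "\<And>i. i \<in> {1..k} \<Longrightarrow> a i > 0"
    and c: "0 < c" "c \<le> 1" and KC: "3 * 8^k * (\<Sum>i=1..k. a i) * (real k)^2 * c^2 \<le> \<epsilon>"
    and N: "k \<le> N" and eta: "2^k * real N powr (-1/4) \<le> 1/2"
  shows "measure (gauss_space N)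
     {\<omega> \<in> space (gauss_space N).
        \<bar>real N powr (2 / real k) *
          ((MIN j\<in>{1..N}. \<Sum>i=1..k. a i * (sqrt (real N) * gsn N (yvec \<omega>) i j)\<^sup>2)
         - (MIN j\<in>{1..N}. \<Sum>i=1..k. a i * (gs N (yvec \<omega>) i j)\<^sup>2))\<bar> > \<epsilon>}
    \<le> (real k)^2 * (3 * real N / (real N powr (-1/4) * real N)^2)
       + (3 / (c * real N powr (-7 / (8 * real k))))^k / real N"
proof -
  let ?S = "{\<omega> \<in> space (gauss_space N).
        \<bar>real N powr (2 / real k) *
          ((MIN j\<in>{1..N}. \<Sum>i=1..k. a i * (sqrt (real N) * gsn N (yvec \<omega>) i j)\<^sup>2)
         - (MIN j\<in>{1..N}. \<Sum>i=1..k. a i * (gs N (yvec \<omega>) i j)\<^sup>2))\<bar> > \<epsilon>}"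
  have N1: "real N \<ge> 1" using k N by simp
  have Npos: "real N > 0" using N1 by simp
  define \<eta> where "\<eta> = real N powr (-1/4)"
  define b where "b = \<eta> * real N"
  define u where "u = c * real N powr (-7 / (8 * real k))"
  have eta0: "0 \<le> \<eta>" unfolding \<eta>_def by simp
  have eta1: "2^k * \<eta> \<le> 1/2" unfolding \<eta>_def by (rule eta)
  have bpos: "b > 0" unfolding b_def \<eta>_def using Npos by simp
  have upos: "u > 0" unfolding u_def using c Npos by simp
  have Ple: "real N powr (-7 / (8 * real k)) \<le> 1"
  proof -
    have "real N powr (-7 / (8 * real k)) \<le> real N powr 0"
      by (rule powr_mono[OF _ N1]) simp
    then show ?thesis using Npos by simp
  qed
  have ule: "u \<le> 1" unfolding u_def using c Ple
    by (metis mult_le_one less_imp_le powr_ge_zero)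
  obtain B where B: "B \<in> sets (gauss_space N)"
    "{\<omega> \<in> space (gauss_space N). \<forall>l\<in>{1..N}. \<exists>i\<in>{1..k}. \<bar>\<omega> (i,l)\<bar> > u} \<subseteq> B"
    "measure (gauss_space N) B \<le> (3/u)^k / real N"
    using count_bound[OF k N upos ule] by blast
  define E where "E x = {\<omega> \<in> space (gauss_space N).
      \<bar>ipN N (yvec \<omega> (fst x)) (yvec \<omega> (snd x)) - (if fst x = snd x then real N else 0)\<bar> \<ge> b}" for x
  let ?I = "{1..k} \<times> {1..k}"
  have Ex: "measure (gauss_space N) (E x) \<le> 3 * real N / b\<^sup>2 \<and> E x \<in> sets (gauss_space N)" if "x \<in> ?I" for x
    unfolding E_def by (rule gram_any[OF _ _ bpos]) (use that N in auto)
  define U where "U = (\<Union>x\<in>?I. E x) \<union> B"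
  have Exs: "E x \<in> sets (gauss_space N)" if "x \<in> ?I" for x using Ex[OF that] by blast
  have Exm: "measure (gauss_space N) (E x) \<le> 3 * real N / b\<^sup>2" if "x \<in> ?I" for x using Ex[OF that] by blast
  have UE: "(\<Union>x\<in>?I. E x) \<in> sets (gauss_space N)" by (rule sets.finite_UN) (auto intro: Exs)
  have U: "U \<in> sets (gauss_space N)" unfolding U_def using UE B(1) by (rule sets.Un)
  have SU: "?S \<subseteq> U"
  proof
    fix \<omega> assume om: "\<omega> \<in> ?S"
    show "\<omega> \<in> U"
    proof (rule ccontr)
      assume nU: "\<omega> \<notin> U"
      have sp: "\<omega> \<in> space (gauss_space N)" using om by blast
      have G: "\<bar>ipN N (yvec \<omega> p) (yvec \<omega> i) - (if p = i then real N else 0)\<bar> \<le> \<eta> * real N"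
        if "p \<in> {1..k}" "i \<in> {1..k}" for p i
      proof -
        have "\<omega> \<notin> E (p, i)" using nU that unfolding U_def by blast
        then show ?thesis using sp unfolding E_def b_def by (simp add: not_le)
      qed
      have "\<omega> \<notin> B" using nU unfolding U_def by blast
      then have "\<not> (\<forall>l\<in>{1..N}. \<exists>i\<in>{1..k}. \<bar>\<omega> (i,l)\<bar> > u)" using B(2) sp by blast
      then obtain l0 where l0: "l0 \<in> {1..N}" "\<And>i. i \<in> {1..k} \<Longrightarrow> \<bar>\<omega> (i, l0)\<bar> \<le> u"
        by (auto simp: not_less)
      have A0: "0 \<le> (\<Sum>i=1..k. a i)" using a by (intro sum_nonneg) (auto simp: less_imp_le)
      have K: "real N powr (2 / real k) * (3 * (2^k * \<eta>) * ((\<Sum>i=1..k. a i) * 4^k * (real k * u)^2)) \<le> \<epsilon>"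
        unfolding \<eta>_def u_def by (rule K_cond[OF N1 k _ A0 KC]) (use c in simp)
      have "\<not> (\<bar>real N powr (2 / real k) *
          ((MIN j\<in>{1..N}. \<Sum>i=1..k. a i * (sqrt (real N) * gsn N (yvec \<omega>) i j)\<^sup>2)
         - (MIN j\<in>{1..N}. \<Sum>i=1..k. a i * (gs N (yvec \<omega>) i j)\<^sup>2))\<bar> > \<epsilon>)"
        by (rule pointwise[OF k a Npos eta0 eta1 _ G l0 K]) (use upos in auto)
      then show False using om by blast
    qed
  qed
  have "measure (gauss_space N) ?S \<le> measure (gauss_space N) U"
    by (rule measure_le_sets[OF _ U SU]) (unfold gauss_space_def, rule ps_PiM_normal)
  also have "\<dots> \<le> measure (gauss_space N) (\<Union>x\<in>?I. E x) + measure (gauss_space N) B"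
    unfolding U_def by (rule measure_Un_le[OF UE B(1)])
  also have "measure (gauss_space N) (\<Union>x\<in>?I. E x) \<le> (\<Sum>x\<in>?I. measure (gauss_space N) (E x))"
    by (rule measure_UNION_le) (auto intro: Exs)
  also have "\<dots> \<le> (\<Sum>x\<in>?I. 3 * real N / b\<^sup>2)"
    by (rule sum_mono) (rule Exm)
  also have "\<dots> = (real k)^2 * (3 * real N / b\<^sup>2)" by (simp add: power2_eq_square)
  finally have "measure (gauss_space N) ?S \<le> (real k)^2 * (3 * real N / b\<^sup>2) + (3/u)^k / real N"
    using B(3) by linarith
  then show ?thesis unfolding b_def \<eta>_def u_def .
qed

theorem lemma3p12:
  fixes k :: nat and a :: "nat \<Rightarrow> real"
  assumes "k \<ge> 1"
    and "\<And>i. i \<in> {1..k} \<Longrightarrow> a i > 0"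
  shows "\<forall>\<epsilon>>0. (\<lambda>N. measure (gauss_space N)
     {\<omega> \<in> space (gauss_space N).
        \<bar>real N powr (2 / real k) *
          ((MIN j\<in>{1..N}. \<Sum>i=1..k. a i * (sqrt (real N) * gsn N (yvec \<omega>) i j)\<^sup>2)
         - (MIN j\<in>{1..N}. \<Sum>i=1..k. a i * (gs N (yvec \<omega>) i j)\<^sup>2))\<bar> > \<epsilon>})
     \<longlonglongrightarrow> 0"
proof (intro allI impI)
  fix \<epsilon> :: real assume ep: "\<epsilon> > 0"
  note k = assms(1) and a = assms(2)
  define A where "A = (\<Sum>i=1..k. a i)"
  have A0: "A > 0" unfolding A_def using k a by (intro sum_pos) auto
  define K where "K = 3 * 8^k * A * (real k)^2"
  have K0: "K > 0" unfolding K_def using A0 k by simp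
  define c where "c = min 1 (sqrt (\<epsilon> / K))"
  have c0: "c > 0" unfolding c_def using ep K0 by simp
  have c1: "c \<le> 1" unfolding c_def by simp
  have "c^2 \<le> (sqrt (\<epsilon> / K))^2" unfolding c_def using c0 c_def by (intro power_mono) auto
  also have "\<dots> = \<epsilon> / K" using ep K0 by simp
  finally have "K * c^2 \<le> \<epsilon>" using K0 by (simp add: field_simps)
  then have KC: "3 * 8^k * (\<Sum>i=1..k. a i) * (real k)^2 * c^2 \<le> \<epsilon>" unfolding K_def A_def by simp
  define bnd where "bnd N = (real k)^2 * (3 * real N / (real N powr (-1/4) * real N)^2)
       + (3 / (c * real N powr (-7 / (8 * real k))))^k / real N" for N :: nat
  have ev1: "eventually (\<lambda>N. k \<le> N) sequentially" by (rule eventually_ge_at_top)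
  have "(\<lambda>N::nat. real N powr (-1/4)) \<longlonglongrightarrow> 0" by real_asymp
  then have "eventually (\<lambda>N. real N powr (-1/4) < 1 / 2^(k+1)) sequentially"
    by (rule order_tendstoD) simp
  then have ev2: "eventually (\<lambda>N::nat. 2^k * real N powr (-1/4) \<le> 1/2) sequentially"
  proof (rule eventually_mono)
    fix N :: nat assume "real N powr (-1/4) < 1 / 2^(k+1)"
    then have "2^k * real N powr (-1/4) \<le> 2^k * (1 / 2^(k+1))" by (intro mult_left_mono) auto
    also have "\<dots> = 1/2" by simp
    finally show "2^k * real N powr (-1/4) \<le> 1/2" .
  qed
  have le: "eventually (\<lambda>N. measure (gauss_space N)
     {\<omega> \<in> space (gauss_space N).
        \<bar>real N powr (2 / real k) *
          ((MIN j\<in>{1..N}. \<Sum>i=1..k. a i * (sqrt (real N) * gsn N (yvec \<omega>) i j)\<^sup>2)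
         - (MIN j\<in>{1..N}. \<Sum>i=1..k. a i * (gs N (yvec \<omega>) i j)\<^sup>2))\<bar> > \<epsilon>} \<le> bnd N) sequentially"
    using ev1 ev2
  proof eventually_elim
    case (elim N)
    show ?case unfolding bnd_def by (rule measure_bound[OF k a c0 c1 KC elim(1) elim(2)])
  qed
  have bnd_eq: "eventually (\<lambda>N. (real k)^2 * (3 * real N / (real N powr (-1/4) * real N)^2)
       + (3/c)^k * (real N powr (7/8) / real N) = bnd N) sequentially"
    using ev1
  proof eventually_elim
    case (elim N)
    have N1: "real N \<ge> 1" using elim k by simp
    show ?case unfolding bnd_def by (simp only: second_eq[OF N1 k c0])
  qed
  have "(\<lambda>N. (real k)^2 * (3 * real N / (real N powr (-1/4) * real N)^2)
       + (3/c)^k * (real N powr (7/8) / real N)) \<longlonglongrightarrow> 0"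
    using tendsto_add[OF tendsto_mult_right_zero[OF lim1] tendsto_mult_right_zero[OF lim2]] by simp
  then have bnd0: "bnd \<longlonglongrightarrow> 0" by (rule Lim_transform_eventually[OF _ bnd_eq])
  show "(\<lambda>N. measure (gauss_space N)
     {\<omega> \<in> space (gauss_space N).
        \<bar>real N powr (2 / real k) *
          ((MIN j\<in>{1..N}. \<Sum>i=1..k. a i * (sqrt (real N) * gsn N (yvec \<omega>) i j)\<^sup>2)
         - (MIN j\<in>{1..N}. \<Sum>i=1..k. a i * (gs N (yvec \<omega>) i j)\<^sup>2))\<bar> > \<epsilon>}) \<longlonglongrightarrow> 0"
    by (rule tendsto_sandwich[OF _ le tendsto_const bnd0]) (intro always_eventually allI measure_nonneg)
qed


end
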